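(* Let $n\ge1$. A valid configuration in $\Omega'_n$ contains no tile from the set $A_n\cup\hat A_n$.
   Context: $V_n=\{(v_0,v_1,v_2)\in\mathbb{Z}^3: 0\le v_0\le v_1\le 1,\ v_1\le v_2\le n+1\}$, elements written as words $v_0v_1v_2$. A Wang tile is $t=(a,b,c,d)$ with $\mathrm{RIGHT}(t)=a$, $\mathrm{TOP}(t)=b$, $\mathrm{LEFT}(t)=c$, $\mathrm{BOTTOM}(t)=d$; $\hat t=(b,a,d,c)$, $\hat S=\{\hat t:t\in S\}$. Define (as (right, top, left, bottom)): $W_n=\{(11(i+1),11(j+1),11i,11j):1\le i,j\le n\}$; $B'_n=\{(00(i+1),111,00i,11n):0\le i\le n\}$; $G_n=\{(01(i+1),111,00i,11(n+1)):0\le i\le n\}$; $Y_n=\{(01(i+1),112,01i,11(n+1)):1\le i\le n\}$; $A_n=\{(00(i+1),112,01i,11n):1\le i\le n\}$ (antigreen tiles); $J'_n=\{((0,k,l),(0,r,s),(0,s,r+n),(0,l,k+n)):(k,l),(r,s)\in\{(0,0),(0,1),(1,1)\}\}$. $\mathcal T'_n=W_n\cup B'_n\cup G_n\cup Y_n\cup A_n\cup\hat B'_n\cup\hat G_n\cup\hat Y_n\cup\hat A_n\cup J'_n$. $\Omega'_n$ is the set of configurations $c:\mathbb Z^2\to\mathcal T'_n$ with $\mathrm{RIGHT}(c(\mathbf m))=\mathrm{LEFT}(c(\mathbf m+\mathbf e_1))$ and $\mathrm{TOP}(c(\mathbf m))=\mathrm{BOTTOM}(c(\mathbf m+\mathbf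 e_2))$ for all $\mathbf m$. *)

theory Defs
  imports Main
begin

text \<open>Colours are words v0 v1 v2, represented as integer triples.\<close>
type_synonym color = "int \<times> int \<times> int"

text \<open>A Wang tile (right, top, left, bottom).\<close>
type_synonym tile = "color \<times> color \<times> color \<times> color"

definition RIGHT :: "tile \<Rightarrow> color" where "RIGHT t = (case t of (a,b,c,d) \<Rightarrow> a)"
definition TOP :: "tile \<Rightarrow> color" where "TOP t = (case t of (a,b,c,d) \<Rightarrow> b)"
definition LEFT :: "tile \<Rightarrow> color" where "LEFT t = (case t of (a,b,c,d) \<Rightarrow> c)"
definition BOTTOM :: "tile \<Rightarrow> color" where "BOTTOM t = (case t of (a,b,c,d) \<Rightarrow> d)"

definition V :: "nat \<Rightarrow> color set" where
  "V n = {(v0,v1,v2). 0 \<le> v0 \<and> v0 \<le> v1 \<and> v1 \<le> 1 \<and> v1 \<le> v2 \<and> v2 \<le> int n + 1}"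

definition hat :: "tile \<Rightarrow> tile" where
  "hat t = (case t of (a,b,c,d) \<Rightarrow> (b,a,d,c))"

definition hatS :: "tile set \<Rightarrow> tile set" where
  "hatS S = hat ` S"

definition W :: "nat \<Rightarrow> tile set" where
  "W n = {((1,1,i+1),(1,1,j+1),(1,1,i),(1,1,j)) | i j. 1 \<le> i \<and> i \<le> int n \<and> 1 \<le> j \<and> j \<le> int n}"

definition B' :: "nat \<Rightarrow> tile set" where
  "B' n = {((0,0,i+1),(1,1,1),(0,0,i),(1,1,int n)) | i. 0 \<le> i \<and> i \<le> int n}"

definition G :: "nat \<Rightarrow> tile set" where
  "G n = {((0,1,i+1),(1,1,1),(0,0,i),(1,1,int n+1)) | i. 0 \<le> i \<and> i \<le> int n}"

definition Y :: "nat \<Rightarrow> tile set" where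
  "Y n = {((0,1,i+1),(1,1,2),(0,1,i),(1,1,int n+1)) | i. 1 \<le> i \<and> i \<le> int n}"

definition A :: "nat \<Rightarrow> tile set" where
  "A n = {((0,0,i+1),(1,1,2),(0,1,i),(1,1,int n)) | i. 1 \<le> i \<and> i \<le> int n}"

definition J' :: "nat \<Rightarrow> tile set" where
  "J' n = {((0,k,l),(0,r,s),(0,s,r+int n),(0,l,k+int n)) | k l r s.
             (k,l) \<in> {(0,0),(0,1),(1,1)} \<and> (r,s) \<in> {(0,0),(0,1),(1,1)}}"

definition T' :: "nat \<Rightarrow> tile set" where
  "T' n = W n \<union> B' n \<union> G n \<union> Y n \<union> A n \<union> hatS (B' n) \<union> hatS (G n)
          \<union> hatS (Y n) \<union> hatS (A n) \<union> J' n"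

definition Omega' :: "nat \<Rightarrow> (int \<times> int \<Rightarrow> tile) set" where
  "Omega' n = {c. (\<forall>m. c m \<in> T' n) \<and>
      (\<forall>x y. RIGHT (c (x,y)) = LEFT (c (x+1,y)) \<and> TOP (c (x,y)) = BOTTOM (c (x,y+1)))}"

end

theory Submission
  imports Defs
begin

lemma classify:
  assumes "t \<in> T' n"
  shows "(\<exists>i j. t = ((1,1,i+1),(1,1,j+1),(1,1,i),(1,1,j)) \<and> 1\<le>i \<and> i\<le>int n \<and> 1\<le>j \<and> j\<le>int n) \<or>
  (\<exists>hi ho i. t = ((0,ho,i+1),(1,1,1+hi),(0,hi,i),(1,1,int n+ho)) \<and> hi\<in>{0,1} \<and> ho\<in>{0,1} \<and> 0 \<le> i \<and> i \<le> int n) \<or>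
  (\<exists>hi ho i. t = ((1,1,1+hi),(0,ho,i+1),(1,1,int n+ho),(0,hi,i)) \<and> hi\<in>{0,1} \<and> ho\<in>{0,1} \<and> 0 \<le> i \<and> i \<le> int n) \<or>
  (\<exists>k l r s. t = ((0,k,l),(0,r,s),(0,s,r+int n),(0,l,k+int n)) \<and> k\<in>{0,1} \<and> l\<in>{0,1} \<and> r\<in>{0,1} \<and> s\<in>{0,1})"
  using assms
  unfolding T'_def W_def B'_def G_def Y_def A_def J'_def hatS_def hat_def
  apply (elim UnE)
  subgoal by blast
  subgoal apply (rule disjI2, rule disjI1) by (clarsimp, (metis add_0 add.right_neutral add.commute insertI1 insertI2)?)
  subgoal apply (rule disjI2, rule disjI1) by (clarsimp, (metis add_0 add.right_neutral add.commute insertI1 insertI2)?)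
  subgoal apply (rule disjI2, rule disjI1) by (clarsimp, (metis add_0 add.right_neutral add.commute insertI1 insertI2)?)
  subgoal apply (rule disjI2, rule disjI1) by (clarsimp, (metis add_0 add.right_neutral add.commute insertI1 insertI2)?)
  subgoal apply (rule disjI2, rule disjI2, rule disjI1) by (clarsimp, (metis add_0 add.right_neutral add.commute insertI1 insertI2)?)
  subgoal apply (rule disjI2, rule disjI2, rule disjI1) by (clarsimp, (metis add_0 add.right_neutral add.commute insertI1 insertI2)?)
  subgoal apply (rule disjI2, rule disjI2, rule disjI1) by (clarsimp, (metis add_0 add.right_neutral add.commute insertI1 insertI2)?)
  subgoal apply (rule disjI2, rule disjI2, rule disjI1) by (clarsimp, (metis add_0 add.right_neutral add.commute insertI1 insertI2)?)
  subgoal apply (rule disjI2, rule disjI2, rule disjI2) by auto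
  done

definition thd :: "color \<Rightarrow> int" where "thd x = snd (snd x)"

lemma tile_facts:
  assumes "t \<in> T' n"
  shows "fst (RIGHT t) = fst (LEFT t)" "fst (TOP t) = fst (BOTTOM t)"
    "fst (LEFT t) \<in> {0,1}" "fst (BOTTOM t) \<in> {0,1}"
    "fst (LEFT t) = 1 \<Longrightarrow> thd (TOP t) = thd (BOTTOM t) + 1"
    "fst (BOTTOM t) = 1 \<Longrightarrow> thd (RIGHT t) = thd (LEFT t) + 1"
    "fst (LEFT t) = 1 \<Longrightarrow> fst (BOTTOM t) = 1 \<Longrightarrow> thd (BOTTOM t) \<le> int n"
    "fst (LEFT t) = 0 \<Longrightarrow> fst (BOTTOM t) = 1 \<Longrightarrow> 0 \<le> thd (LEFT t) \<and> thd (LEFT t) \<le> int n"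
  using classify[OF assms] by (auto simp: RIGHT_def LEFT_def TOP_def BOTTOM_def thd_def)

lemma tile_BGYA:
  assumes "t \<in> T' n" "fst (LEFT t) = 0" "fst (BOTTOM t) = 1"
  shows "\<exists>hi ho i. t = ((0,ho,i+1),(1,1,1+hi),(0,hi,i),(1,1,int n+ho)) \<and> hi\<in>{0,1} \<and> ho\<in>{0,1}"
  using classify[OF assms(1)] assms(2,3) by (auto simp: LEFT_def BOTTOM_def)

lemma tile_J:
  assumes "t \<in> T' n" "fst (LEFT t) = 0" "fst (BOTTOM t) = 0"
  shows "\<exists>k l r s. t = ((0,k,l),(0,r,s),(0,s,r+int n),(0,l,k+int n)) \<and> k\<in>{0,1} \<and> l\<in>{0,1} \<and> r\<in>{0,1} \<and> s\<in>{0,1}"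
  using classify[OF assms(1)] assms(2,3) by (auto simp: LEFT_def BOTTOM_def)

lemma om: assumes "c \<in> Omega' n"
  shows "c m \<in> T' n" "RIGHT (c (x,y)) = LEFT (c (x+1,y))" "TOP (c (x,y)) = BOTTOM (c (x,y+1))"
  using assms unfolding Omega'_def by (auto, metis surj_pair)

lemma rho_nat: assumes "c \<in> Omega' n"
  shows "fst (LEFT (c (x + int k, y))) = fst (LEFT (c (x,y)))"
proof (induction k)
  case 0 then show ?case by simp
next
  case (Suc k)
  have "fst (LEFT (c (x + int (Suc k), y))) = fst (RIGHT (c (x + int k, y)))"
    using om(2)[OF assms, of "x + int k" y] by (metis add.assoc add.commute of_nat_Suc)
  also have "\<dots> = fst (LEFT (c (x + int k, y)))" using tile_facts(1)[OF om(1)[OF assms]] .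
  finally show ?case using Suc by simp
qed

lemma rho: assumes "c \<in> Omega' n"
  shows "fst (LEFT (c (x', y))) = fst (LEFT (c (x,y)))"
proof (cases "x \<le> x'")
  case True
  then obtain k where "x' = x + int k" by (metis le_iff_add nat_int zle_iff_zadd)
  then show ?thesis using rho_nat[OF assms] by simp
next
  case False
  then obtain k where "x = x' + int k" by (metis le_iff_add nat_int zle_iff_zadd linear)
  then show ?thesis using rho_nat[OF assms] by simp
qed

lemma kap_nat: assumes "c \<in> Omega' n"
  shows "fst (BOTTOM (c (x, y + int k))) = fst (BOTTOM (c (x,y)))"
proof (induction k)
  case 0 then show ?case by simp
next
  case (Suc k)
  have "fst (BOTTOM (c (x, y + int (Suc k)))) = fst (TOP (c (x, y + int k)))"
    using om(3)[OF assms, of x "y + int k"] by (metis add.assoc add.commute of_nat_Suc)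
  also have "\<dots> = fst (BOTTOM (c (x, y + int k)))" using tile_facts(2)[OF om(1)[OF assms]] .
  finally show ?case using Suc by simp
qed

lemma kap: assumes "c \<in> Omega' n"
  shows "fst (BOTTOM (c (x, y'))) = fst (BOTTOM (c (x,y)))"
proof (cases "y \<le> y'")
  case True
  then obtain k where "y' = y + int k" by (metis le_iff_add nat_int zle_iff_zadd)
  then show ?thesis using kap_nat[OF assms] by simp
next
  case False
  then obtain k where "y = y' + int k" by (metis le_iff_add nat_int zle_iff_zadd linear)
  then show ?thesis using kap_nat[OF assms] by simp
qed

lemma climb_v: assumes "c \<in> Omega' n"
  shows "0 < g \<Longrightarrow> (\<forall>d. 0 < d \<and> d < g \<longrightarrow> fst (LEFT (c (x, y0 + int d))) = 1) \<Longrightarrow>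
    thd (BOTTOM (c (x, y0 + int g))) = thd (TOP (c (x, y0))) + int g - 1"
proof (induction g)
  case 0 then show ?case by simp
next
  case (Suc g)
  show ?case
  proof (cases "g = 0")
    case True then show ?thesis using om(3)[OF assms, of x y0] by simp
  next
    case False
    have IH: "thd (BOTTOM (c (x, y0 + int g))) = thd (TOP (c (x, y0))) + int g - 1"
      using Suc False by auto
    have L: "fst (LEFT (c (x, y0 + int g))) = 1" using Suc.prems False by auto
    have "BOTTOM (c (x, y0 + int (Suc g))) = TOP (c (x, y0 + int g))"
      using om(3)[OF assms, of x "y0 + int g"] by (metis add.assoc add.commute of_nat_Suc)
    then show ?thesis using tile_facts(5)[OF om(1)[OF assms] L] IH by simp
  qed
qed

lemma climb_h: assumes "c \<in> Omega' n"
  shows "0 < g \<Longrightarrow> (\<forall>d. 0 < d \<and> d < g \<longrightarrow> fst (BOTTOM (c (x0 + int d, y))) = 1) \<Longrightarrow>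
    thd (LEFT (c (x0 + int g, y))) = thd (RIGHT (c (x0, y))) + int g - 1"
proof (induction g)
  case 0 then show ?case by simp
next
  case (Suc g)
  show ?case
  proof (cases "g = 0")
    case True then show ?thesis using om(2)[OF assms, of x0 y] by simp
  next
    case False
    have IH: "thd (LEFT (c (x0 + int g, y))) = thd (RIGHT (c (x0, y))) + int g - 1"
      using Suc False by auto
    have L: "fst (BOTTOM (c (x0 + int g, y))) = 1" using Suc.prems False by auto
    have "LEFT (c (x0 + int (Suc g), y)) = RIGHT (c (x0 + int g, y))"
      using om(2)[OF assms, of "x0 + int g" y] by (metis add.assoc add.commute of_nat_Suc)
    then show ?thesis using tile_facts(6)[OF om(1)[OF assms] L] IH by simp
  qed
qed


lemma main:
  assumes omg: "c \<in> Omega' n" and n1: "1 \<le> n"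
  shows "\<forall>x0 y0 i. c (x0,y0) = ((0,0,i+1),(1,1,2),(0,1,i),(1,1,int n)) \<longrightarrow>
     fst (BOTTOM (c (x0 + 1 + int k, 0))) = 0 \<longrightarrow>
     (\<forall>x. x0 < x \<and> x < x0 + 1 + int k \<longrightarrow> fst (BOTTOM (c (x,0))) = 1) \<longrightarrow> False"
proof (induction k rule: less_induct)
  case (less k)
  have IH0: "k > 0 \<Longrightarrow> \<forall>x0 y0 i. c (x0,y0) = ((0,0,i+1),(1,1,2),(0,1,i),(1,1,int n)) \<longrightarrow>
     fst (BOTTOM (c (x0 + 1 + int (k - 1), 0))) = 0 \<longrightarrow>
     (\<forall>x. x0 < x \<and> x < x0 + 1 + int (k - 1) \<longrightarrow> fst (BOTTOM (c (x,0))) = 1) \<longrightarrow> False"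
    using less.IH[of "k-1"] by simp
  show ?case
  proof (intro allI impI)
    fix x0 y0 i
    assume A0: "c (x0,y0) = ((0,0,i+1),(1,1,2),(0,1,i),(1,1,int n))"
      and Bk: "fst (BOTTOM (c (x0 + 1 + int k, 0))) = 0"
      and Bet: "\<forall>x. x0 < x \<and> x < x0 + 1 + int k \<longrightarrow> fst (BOTTOM (c (x,0))) = 1"
    define b where "b = x0 + 1 + int k"
    have T: "\<And>m. c m \<in> T' n" using om(1)[OF omg] .
    have rho0: "\<And>x. fst (LEFT (c (x, y0))) = 0" using rho[OF omg, of _ y0 x0] A0 by (simp add: LEFT_def)
    have kap0: "\<And>y. fst (BOTTOM (c (x0, y))) = 1" using kap[OF omg, of x0 _ y0] A0 by (simp add: BOTTOM_def)
    have kapb: "\<And>y. fst (BOTTOM (c (b, y))) = 0" using kap[OF omg, of b _ 0] Bk b_def by simp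
    have ex: "\<exists>d::nat. 0 < d \<and> fst (LEFT (c (x0, y0 + int d))) = 0"
    proof (rule ccontr)
      assume "\<not> ?thesis"
      then have all1: "\<And>d::nat. 0 < d \<Longrightarrow> fst (LEFT (c (x0, y0 + int d))) = 1"
        using tile_facts(3)[OF T] by blast
      have "thd (BOTTOM (c (x0, y0 + int n))) = thd (TOP (c (x0, y0))) + int n - 1"
        using climb_v[OF omg, of n x0 y0] all1 n1 by auto
      also have "\<dots> = int n + 1" using A0 by (simp add: TOP_def thd_def)
      finally have "thd (BOTTOM (c (x0, y0 + int n))) = int n + 1" .
      moreover have "thd (BOTTOM (c (x0, y0 + int n))) \<le> int n"
        using tile_facts(7)[OF T all1[of n] kap0] n1 by simp
      ultimately show False by simp
    qed
    obtain g :: nat where g: "0 < g" "fst (LEFT (c (x0, y0 + int g))) = 0"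
      and gmin: "\<And>d. d < g \<Longrightarrow> \<not> (0 < d \<and> fst (LEFT (c (x0, y0 + int d))) = 0)"
      using ex exists_least_iff[of "\<lambda>d. 0 < d \<and> fst (LEFT (c (x0, y0 + int d))) = 0"] by blast
    have below: "\<And>x d. 0 < d \<and> d < g \<Longrightarrow> fst (LEFT (c (x, y0 + int d))) = 1"
    proof -
      fix x d assume "0 < d \<and> d < g"
      then have "fst (LEFT (c (x0, y0 + int d))) \<noteq> 0" using gmin by blast
      then have "fst (LEFT (c (x0, y0 + int d))) = 1" using tile_facts(3)[OF T] by blast
      then show "fst (LEFT (c (x, y0 + int d))) = 1" by (metis rho[OF omg])
    qed
    have rhog: "\<And>x. fst (LEFT (c (x, y0 + int g))) = 0" by (metis rho[OF omg] g(2))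
    have cx0: "thd (BOTTOM (c (x0, y0 + int g))) = int g + 1"
      using climb_v[OF omg, of g x0 y0] below g(1) A0 by (simp add: TOP_def thd_def)
    obtain hi1 ho1 i1 where t1: "c (x0, y0 + int g) = ((0,ho1,i1+1),(1,1,1+hi1),(0,hi1,i1),(1,1,int n+ho1))"
      and hio1: "hi1 \<in> {0,1}" "ho1 \<in> {0,1}"
      using tile_BGYA[OF T rhog kap0] by blast
    have eq1: "int g + 1 = int n + ho1" using cx0 t1 by (simp add: BOTTOM_def thd_def)
    obtain k1 l1 r1 s1 where tb: "c (b, y0) = ((0,k1,l1),(0,r1,s1),(0,s1,r1+int n),(0,l1,k1+int n))"
      and s1: "s1 \<in> {0,1}"
      using tile_J[OF T rho0 kapb] by blast
    obtain k2 l2 r2 s2 where tb2: "c (b, y0 + int g) = ((0,k2,l2),(0,r2,s2),(0,s2,r2+int n),(0,l2,k2+int n))"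
      and k2: "k2 \<in> {0,1}"
      using tile_J[OF T rhog kapb] by blast
    have cb: "thd (BOTTOM (c (b, y0 + int g))) = thd (TOP (c (b, y0))) + int g - 1"
      using climb_v[OF omg, of g b y0] below g(1) by simp
    then have eq2: "k2 + int n = s1 + int g - 1" using tb tb2 by (simp add: BOTTOM_def TOP_def thd_def)
    have gn: "int g = int n" and s11: "s1 = 1" and ho11: "ho1 = 1"
      using eq1 eq2 s1 k2 hio1 by auto
    have lb: "LEFT (c (b, y0)) = RIGHT (c (b - 1, y0))" using om(2)[OF omg, of "b-1" y0] by simp
    show False
    proof (cases "k = 0")
      case True
      then have "b - 1 = x0" using b_def by simp
      then have "LEFT (c (b, y0)) = (0,0,i+1)" using lb A0 by (simp add: RIGHT_def)
      then show False using tb s11 by (simp add: LEFT_def)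
    next
      case False
      have kx1: "\<And>y. fst (BOTTOM (c (x0 + 1, y))) = 1"
        using Bet[rule_format, of "x0+1"] False kap[OF omg, of "x0+1" _ 0] by simp
      obtain hi2 ho2 i2 where t2: "c (x0 + 1, y0) = ((0,ho2,i2+1),(1,1,1+hi2),(0,hi2,i2),(1,1,int n+ho2))"
        using tile_BGYA[OF T rho0 kx1] by blast
      have "LEFT (c (x0+1, y0)) = RIGHT (c (x0, y0))" using om(2)[OF omg, of x0 y0] by simp
      then have hi2: "hi2 = 0" using t2 A0 by (simp add: LEFT_def RIGHT_def)
      have cx1: "thd (BOTTOM (c (x0+1, y0 + int g))) = thd (TOP (c (x0+1, y0))) + int g - 1"
        using climb_v[OF omg, of g "x0+1" y0] below g(1) by simp
      obtain hi3 ho3 i3 where t3: "c (x0 + 1, y0 + int g) = ((0,ho3,i3+1),(1,1,1+hi3),(0,hi3,i3),(1,1,int n+ho3))"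
        using tile_BGYA[OF T rhog kx1] by blast
      have ho3: "ho3 = 0" using cx1 t2 t3 hi2 gn by (simp add: BOTTOM_def TOP_def thd_def)
      have "LEFT (c (x0+1, y0 + int g)) = RIGHT (c (x0, y0 + int g))" using om(2)[OF omg, of x0 "y0 + int g"] by simp
      then have hi3: "hi3 = 1" using t3 t1 ho11 by (simp add: LEFT_def RIGHT_def)
      have A1: "c (x0+1, y0 + int g) = ((0,0,i3+1),(1,1,2),(0,1,i3),(1,1,int n))"
        using t3 hi3 ho3 by simp
      have e: "x0 + 1 + 1 + int (k - 1) = b" using False b_def by simp
      have IH1: "\<forall>x0 y0 i. c (x0,y0) = ((0,0,i+1),(1,1,2),(0,1,i),(1,1,int n)) \<longrightarrow>
     fst (BOTTOM (c (x0 + 1 + int (k - 1), 0))) = 0 \<longrightarrow>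
     (\<forall>x. x0 < x \<and> x < x0 + 1 + int (k - 1) \<longrightarrow> fst (BOTTOM (c (x,0))) = 1) \<longrightarrow> False"
        using IH0 False by simp
      have bet2: "\<forall>x. x0 + 1 < x \<and> x < x0 + 1 + 1 + int (k - 1) \<longrightarrow> fst (BOTTOM (c (x,0))) = 1"
        using Bet e b_def by auto
      have "fst (BOTTOM (c (x0 + 1 + 1 + int (k - 1), 0))) = 0" using kapb[of 0] e by simp
      then show False
        using IH1 A1 bet2 by blast
    qed
  qed
qed


lemma noA:
  assumes omg: "c \<in> Omega' n" and n1: "1 \<le> n"
  shows "c m \<notin> A n"
proof
  assume "c m \<in> A n"
  obtain x0 y0 where m: "m = (x0,y0)" by fastforce
  obtain i where A0: "c (x0,y0) = ((0,0,i+1),(1,1,2),(0,1,i),(1,1,int n))"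
    using \<open>c m \<in> A n\<close> m unfolding A_def by blast
  have T: "\<And>m. c m \<in> T' n" using om(1)[OF omg] .
  have rho0: "\<And>x. fst (LEFT (c (x, y0))) = 0"
  proof -
    fix x show "fst (LEFT (c (x, y0))) = 0" using rho[OF omg, of x y0 x0] A0 by (simp add: LEFT_def)
  qed
  have i0: "0 \<le> i" using tile_facts(8)[OF T, of "(x0,y0)"] A0 by (simp add: LEFT_def BOTTOM_def thd_def)
  have ex: "\<exists>k::nat. fst (BOTTOM (c (x0 + 1 + int k, 0))) = 0"
  proof (rule ccontr)
    assume "\<not> ?thesis"
    then have all1: "\<And>k::nat. fst (BOTTOM (c (x0 + 1 + int k, 0))) = 1"
      using tile_facts(4)[OF T] by blast
    have all1': "\<And>d::nat. 0 < d \<Longrightarrow> fst (BOTTOM (c (x0 + int d, y))) = 1" for y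
    proof -
      fix d :: nat assume "0 < d"
      then have e: "x0 + 1 + int (d - 1) = x0 + int d" by simp
      have "fst (BOTTOM (c (x0 + int d, 0))) = 1" using all1[of "d-1"] unfolding e .
      then show "fst (BOTTOM (c (x0 + int d, y))) = 1" using kap[OF omg, of "x0 + int d" y 0] by argo
    qed
    have "thd (LEFT (c (x0 + int (n+1), y0))) = thd (RIGHT (c (x0, y0))) + int (n+1) - 1"
      using climb_h[OF omg, of "n+1" x0 y0] all1' by auto
    also have "\<dots> = i + 1 + int n" using A0 by (simp add: RIGHT_def thd_def)
    finally have "thd (LEFT (c (x0 + int (n+1), y0))) = i + 1 + int n" .
    moreover have "thd (LEFT (c (x0 + int (n+1), y0))) \<le> int n"
      using tile_facts(8)[OF T rho0 all1'[of "n+1" y0]] by simp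
    ultimately show False using i0 by simp
  qed
  obtain k :: nat where k: "fst (BOTTOM (c (x0 + 1 + int k, 0))) = 0"
    and kmin: "\<And>j. j < k \<Longrightarrow> \<not> fst (BOTTOM (c (x0 + 1 + int j, 0))) = 0"
    using ex exists_least_iff[of "\<lambda>k. fst (BOTTOM (c (x0 + 1 + int k, 0))) = 0"] by blast
  have Bet: "\<forall>x. x0 < x \<and> x < x0 + 1 + int k \<longrightarrow> fst (BOTTOM (c (x,0))) = 1"
  proof (intro allI impI)
    fix x assume h: "x0 < x \<and> x < x0 + 1 + int k"
    define j where "j = nat (x - x0 - 1)"
    have xj: "x = x0 + 1 + int j" "j < k" using h j_def by auto
    then have "fst (BOTTOM (c (x, 0))) \<noteq> 0" using kmin by simp
    then show "fst (BOTTOM (c (x,0))) = 1" using tile_facts(4)[OF T] by blast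
  qed
  have M: "c (x0,y0) = ((0,0,i+1),(1,1,2),(0,1,i),(1,1,int n)) \<longrightarrow>
     fst (BOTTOM (c (x0 + 1 + int k, 0))) = 0 \<longrightarrow>
     (\<forall>x. x0 < x \<and> x < x0 + 1 + int k \<longrightarrow> fst (BOTTOM (c (x,0))) = 1) \<longrightarrow> False"
    using main[OF omg n1, of k] by blast
  show False using M A0 k Bet by blast
qed

lemma hat_hat: "hat (hat t) = t" by (cases t) (simp add: hat_def)

lemma hat_T: assumes "t \<in> T' n" shows "hat t \<in> T' n"
proof -
  have hJ: "hat t \<in> J' n" if tJ: "t \<in> J' n"
  proof -
    obtain k l r s where t: "t = ((0,k,l),(0,r,s),(0,s,r+int n),(0,l,k+int n))"
      and kl: "(k,l) \<in> {(0,0),(0,1),(1,1)}" and rs: "(r,s) \<in> {(0,0),(0,1),(1,1)}"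
      using tJ unfolding J'_def by blast
    have "hat t = ((0,r,s),(0,k,l),(0,l,k+int n),(0,s,r+int n))" using t by (simp add: hat_def)
    then show ?thesis unfolding J'_def using kl rs by blast
  qed
  have hW: "hat t \<in> W n" if tW: "t \<in> W n"
  proof -
    obtain i j where t: "t = ((1,1,i+1),(1,1,j+1),(1,1,i),(1,1,j))" and b: "1 \<le> i \<and> i \<le> int n \<and> 1 \<le> j \<and> j \<le> int n"
      using tW unfolding W_def by blast
    have "hat t = ((1,1,j+1),(1,1,i+1),(1,1,j),(1,1,i))" using t by (simp add: hat_def)
    then show ?thesis unfolding W_def using b by blast
  qed
  have "\<And>S. t \<in> hatS S \<Longrightarrow> hat t \<in> S" unfolding hatS_def using hat_hat by auto
  moreover have "\<And>S. t \<in> S \<Longrightarrow> hat t \<in> hatS S" unfolding hatS_def by auto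
  ultimately show ?thesis using assms hJ hW unfolding T'_def by blast
qed

lemma hat_sides: "RIGHT (hat t) = TOP t" "LEFT (hat t) = BOTTOM t" "TOP (hat t) = RIGHT t" "BOTTOM (hat t) = LEFT t"
  by (cases t, simp add: hat_def RIGHT_def LEFT_def TOP_def BOTTOM_def)+

lemma transp_om:
  assumes "c \<in> Omega' n"
  shows "(\<lambda>(x,y). hat (c (y,x))) \<in> Omega' n"
proof -
  have T: "\<And>m. c m \<in> T' n" using om(1)[OF assms] .
  show ?thesis unfolding Omega'_def
  proof (intro CollectI conjI allI)
    fix m :: "int \<times> int"
    show "(\<lambda>(x,y). hat (c (y,x))) m \<in> T' n" by (cases m) (simp add: hat_T T)
  next
    fix x y :: int
    show "RIGHT ((\<lambda>(x,y). hat (c (y,x))) (x,y)) = LEFT ((\<lambda>(x,y). hat (c (y,x))) (x+1,y))"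
      using om(3)[OF assms, of y x] by (simp add: hat_sides)
    show "TOP ((\<lambda>(x,y). hat (c (y,x))) (x,y)) = BOTTOM ((\<lambda>(x,y). hat (c (y,x))) (x,y+1))"
      using om(2)[OF assms, of y x] by (simp add: hat_sides)
  qed
qed

theorem lemma7p2:
  fixes n :: nat and c :: "int \<times> int \<Rightarrow> tile"
  assumes "1 \<le> n" and "c \<in> Omega' n"
  shows "\<forall>m. c m \<notin> A n \<union> hatS (A n)"
proof
  fix m :: "int \<times> int"
  obtain x y where m: "m = (x,y)" by fastforce
  have "c m \<notin> A n" using noA[OF assms(2,1)] .
  moreover have "c m \<notin> hatS (A n)"
  proof
    assume "c m \<in> hatS (A n)"
    then have "hat (c (x,y)) \<in> A n" unfolding hatS_def using hat_hat m by auto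
    then show False using noA[OF transp_om[OF assms(2)] assms(1), of "(y,x)"] by simp
  qed
  ultimately show "c m \<notin> A n \<union> hatS (A n)" by blast
qed

end
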